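(* Let $\mathfrak m_+,\mathfrak m_-$ be Lie subalgebras of $\mathfrak g$ with $\mathfrak l_r\subset\mathfrak m_+\oplus\mathfrak m_-$, and $\mathfrak t=\mathfrak m_+\cap\mathfrak m_-$. Then the following are equivalent: (i) $\mathfrak m_+\oplus\mathfrak m_-\subset\mathfrak n_{\mathfrak g\oplus\mathfrak g}(\mathfrak l_r)$ (the normalizer of $\mathfrak l_r$ in $\mathfrak g\oplus\mathfrak g$); (ii) $[\mathfrak m_+,\mathfrak f_+]\subset\mathfrak f_+^\perp$ and $[\mathfrak m_-,\mathfrak f_-]\subset\mathfrak f_-^\perp$; (iii) $\delta_r(x)=0$ for all $x\in\mathfrak t$.
   Context: $\mathfrak g$ is a real or complex Lie algebra and $r=\sum_ix_i\otimes y_i\in\mathfrak g\otimes\mathfrak g$ a factorizable quasitriangular $r$-matrix: $r+r^{21}$ is ad-invariant and nondegenerate and the classical Yang–Baxter equation holds. $\delta_r(x)=\mathrm{ad}_x(r)$. $r_+(\xi)=\sum_i\langle\xi,x_i\rangle y_i$, $r_-(\xi)=-\sum_i\langle\xi,y_i\rangle x_i$ ($\xi\in\mathfrak g^*$); $\langle a,b\rangle_{\mathfrak g}=\langle(r_+-r_-)^{-1}a,b\rangle$, $\perp$ orthogonality; $r^\flat_\pm=r_\pm\circ(r_+-r_-)^{-1}$; $\mathfrak f_\pm=\mathrm{Im}\,r_\pm$; $\mathfrak l_r=\{(r^\flat_+(x),r^\flat_-(x)):x\in\mathfrak g\}\subset\mathfrak g\oplus\mathfrak g$ (direct product Lie algebra).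 *)

theory Defs
  imports Complex_Main
begin

definition lie_algebra :: "('k::field \<Rightarrow> 'g::ab_group_add \<Rightarrow> 'g) \<Rightarrow> ('g \<Rightarrow> 'g \<Rightarrow> 'g) \<Rightarrow> bool" where
  "lie_algebra sc br \<longleftrightarrow> vector_space sc
     \<and> (\<forall>y. Vector_Spaces.linear sc sc (\<lambda>x. br x y))
     \<and> (\<forall>x. Vector_Spaces.linear sc sc (\<lambda>y. br x y))
     \<and> (\<forall>x. br x x = 0)
     \<and> (\<forall>x y z. br x (br y z) + br y (br z x) + br z (br x y) = 0)"

definition lie_subalgebra :: "('k::field \<Rightarrow> 'g::ab_group_add \<Rightarrow> 'g) \<Rightarrow> ('g \<Rightarrow> 'g \<Rightarrow> 'g) \<Rightarrow> 'g set \<Rightarrow> bool" where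
  "lie_subalgebra sc br M \<longleftrightarrow> module.subspace sc M \<and> (\<forall>a\<in>M. \<forall>b\<in>M. br a b \<in> M)"

definition dual :: "('k::field \<Rightarrow> 'g::ab_group_add \<Rightarrow> 'g) \<Rightarrow> ('g \<Rightarrow> 'k) set" where
  "dual sc = {\<xi>. Vector_Spaces.linear sc (*) \<xi>}"

text \<open>Tensors in g\<otimes>g are represented by finite lists of pure tensors a\<otimes>b; such a
  tensor is zero iff it is killed by every pair of linear functionals.\<close>
definition tensor2_zero :: "('k::field \<Rightarrow> 'g::ab_group_add \<Rightarrow> 'g) \<Rightarrow> ('g \<times> 'g) list \<Rightarrow> bool" where
  "tensor2_zero sc t \<longleftrightarrow> (\<forall>\<phi>\<in>dual sc. \<forall>\<psi>\<in>dual sc. (\<Sum>(a,b)\<leftarrow>t. \<phi> a * \<psi> b) = 0)"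

definition tensor3_zero :: "('k::field \<Rightarrow> 'g::ab_group_add \<Rightarrow> 'g) \<Rightarrow> ('g \<times> 'g \<times> 'g) list \<Rightarrow> bool" where
  "tensor3_zero sc t \<longleftrightarrow> (\<forall>\<phi>\<in>dual sc. \<forall>\<psi>\<in>dual sc. \<forall>\<chi>\<in>dual sc.
      (\<Sum>(a,b,c)\<leftarrow>t. \<phi> a * \<psi> b * \<chi> c) = 0)"

definition ad2 :: "('g \<Rightarrow> 'g \<Rightarrow> 'g) \<Rightarrow> 'g \<Rightarrow> ('g \<times> 'g) list \<Rightarrow> ('g \<times> 'g) list" where
  "ad2 br x t = concat (map (\<lambda>(a,b). [(br x a, b), (a, br x b)]) t)"

definition flip21 :: "('g \<times> 'g) list \<Rightarrow> ('g \<times> 'g) list" where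
  "flip21 t = map (\<lambda>(a,b). (b,a)) t"

definition delta_zero :: "('k::field \<Rightarrow> 'g::ab_group_add \<Rightarrow> 'g) \<Rightarrow> ('g \<Rightarrow> 'g \<Rightarrow> 'g) \<Rightarrow> ('g \<times> 'g) list \<Rightarrow> 'g \<Rightarrow> bool" where
  "delta_zero sc br r x \<longleftrightarrow> tensor2_zero sc (ad2 br x r)"

text \<open>CYBE: [r12,r13] + [r12,r23] + [r13,r23] = 0 for r = sum x_i \<otimes> y_i.\<close>
definition cybe :: "('k::field \<Rightarrow> 'g::ab_group_add \<Rightarrow> 'g) \<Rightarrow> ('g \<Rightarrow> 'g \<Rightarrow> 'g) \<Rightarrow> ('g \<times> 'g) list \<Rightarrow> bool" where
  "cybe sc br r \<longleftrightarrow> tensor3_zero sc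
     (concat (map (\<lambda>(xi,yi). concat (map (\<lambda>(xj,yj).
        [(br xi xj, yi, yj), (xi, br yi xj, yj), (xi, xj, br yi yj)]) r)) r))"

definition r_plus :: "('k::field \<Rightarrow> 'g::ab_group_add \<Rightarrow> 'g) \<Rightarrow> ('g \<times> 'g) list \<Rightarrow> ('g \<Rightarrow> 'k) \<Rightarrow> 'g" where
  "r_plus sc r \<xi> = (\<Sum>(x,y)\<leftarrow>r. sc (\<xi> x) y)"

definition r_minus :: "('k::field \<Rightarrow> 'g::ab_group_add \<Rightarrow> 'g) \<Rightarrow> ('g \<times> 'g) list \<Rightarrow> ('g \<Rightarrow> 'k) \<Rightarrow> 'g" where
  "r_minus sc r \<xi> = - (\<Sum>(x,y)\<leftarrow>r. sc (\<xi> y) x)"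

definition r_diff :: "('k::field \<Rightarrow> 'g::ab_group_add \<Rightarrow> 'g) \<Rightarrow> ('g \<times> 'g) list \<Rightarrow> ('g \<Rightarrow> 'k) \<Rightarrow> 'g" where
  "r_diff sc r \<xi> = r_plus sc r \<xi> - r_minus sc r \<xi>"

definition r_diff_inv :: "('k::field \<Rightarrow> 'g::ab_group_add \<Rightarrow> 'g) \<Rightarrow> ('g \<times> 'g) list \<Rightarrow> 'g \<Rightarrow> ('g \<Rightarrow> 'k)" where
  "r_diff_inv sc r = inv_into (dual sc) (r_diff sc r)"

definition factorizable_qt :: "('k::field \<Rightarrow> 'g::ab_group_add \<Rightarrow> 'g) \<Rightarrow> ('g \<Rightarrow> 'g \<Rightarrow> 'g) \<Rightarrow> ('g \<times> 'g) list \<Rightarrow> bool" where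
  "factorizable_qt sc br r \<longleftrightarrow>
     (\<forall>x. tensor2_zero sc (ad2 br x (r @ flip21 r)))
     \<and> bij_betw (r_diff sc r) (dual sc) UNIV
     \<and> cybe sc br r"

definition form_g :: "('k::field \<Rightarrow> 'g::ab_group_add \<Rightarrow> 'g) \<Rightarrow> ('g \<times> 'g) list \<Rightarrow> 'g \<Rightarrow> 'g \<Rightarrow> 'k" where
  "form_g sc r a b = r_diff_inv sc r a b"

definition perp :: "('k::field \<Rightarrow> 'g::ab_group_add \<Rightarrow> 'g) \<Rightarrow> ('g \<times> 'g) list \<Rightarrow> 'g set \<Rightarrow> 'g set" where
  "perp sc r S = {a. \<forall>b\<in>S. form_g sc r a b = 0}"

definition r_flat_plus :: "('k::field \<Rightarrow> 'g::ab_group_add \<Rightarrow> 'g) \<Rightarrow> ('g \<times> 'g) list \<Rightarrow> 'g \<Rightarrow> 'g" where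
  "r_flat_plus sc r x = r_plus sc r (r_diff_inv sc r x)"

definition r_flat_minus :: "('k::field \<Rightarrow> 'g::ab_group_add \<Rightarrow> 'g) \<Rightarrow> ('g \<times> 'g) list \<Rightarrow> 'g \<Rightarrow> 'g" where
  "r_flat_minus sc r x = r_minus sc r (r_diff_inv sc r x)"

definition f_plus :: "('k::field \<Rightarrow> 'g::ab_group_add \<Rightarrow> 'g) \<Rightarrow> ('g \<times> 'g) list \<Rightarrow> 'g set" where
  "f_plus sc r = r_plus sc r ` dual sc"

definition f_minus :: "('k::field \<Rightarrow> 'g::ab_group_add \<Rightarrow> 'g) \<Rightarrow> ('g \<times> 'g) list \<Rightarrow> 'g set" where
  "f_minus sc r = r_minus sc r ` dual sc"

definition l_r :: "('k::field \<Rightarrow> 'g::ab_group_add \<Rightarrow> 'g) \<Rightarrow> ('g \<times> 'g) list \<Rightarrow> ('g \<times> 'g) set" where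
  "l_r sc r = {(r_flat_plus sc r x, r_flat_minus sc r x) | x. True}"

definition normalizer2 :: "('g \<Rightarrow> 'g \<Rightarrow> 'g) \<Rightarrow> ('g \<times> 'g) set \<Rightarrow> ('g \<times> 'g) set" where
  "normalizer2 br L = {(a,b). \<forall>(u,v)\<in>L. (br a u, br b v) \<in> L}"

end

theory Submission
  imports Defs
begin


lemma lin_add: "Vector_Spaces.linear s1 s2 f \<Longrightarrow> f (x + y) = f x + f y"
  by (simp add: Vector_Spaces.linear_iff)
lemma lin_scale: "Vector_Spaces.linear s1 s2 f \<Longrightarrow> f (s1 c x) = s2 c (f x)"
  by (simp add: Vector_Spaces.linear_iff)
lemma lin_zero: "Vector_Spaces.linear s1 s2 f \<Longrightarrow> f 0 = 0"
  using lin_add[of s1 s2 f 0 0] by simp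
lemma lin_neg: "Vector_Spaces.linear s1 s2 f \<Longrightarrow> f (- x) = - f x"
  using lin_add[of s1 s2 f x "-x"] lin_zero[of s1 s2 f] by (simp add: eq_neg_iff_add_eq_0 add.commute)
lemma lin_diff: "Vector_Spaces.linear s1 s2 f \<Longrightarrow> f (x - y) = f x - f y"
  using lin_add[of s1 s2 f x "-y"] lin_neg[of s1 s2 f y] by simp

lemma vs_field: "vector_space ((*) :: 'k::field \<Rightarrow> 'k \<Rightarrow> 'k)"
  by unfold_locales (simp_all add: algebra_simps)

locale LA =
  fixes sc :: "'k::field \<Rightarrow> 'g::ab_group_add \<Rightarrow> 'g"
    and br :: "'g \<Rightarrow> 'g \<Rightarrow> 'g"
    and r :: "('g \<times> 'g) list"
  assumes la: "lie_algebra sc br" and fq: "factorizable_qt sc br r"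
begin

lemma vs: "vector_space sc" using la by (simp add: lie_algebra_def)
lemma md: "module sc" using vs by (simp add: module_iff_vector_space)

lemma linL: "Vector_Spaces.linear sc sc (\<lambda>x. br x y)" using la by (simp add: lie_algebra_def)
lemma linR: "Vector_Spaces.linear sc sc (br x)" using la by (simp add: lie_algebra_def)

lemma brL_add: "br (x + y) z = br x z + br y z" using lin_add[OF linL] .
lemma brR_add: "br z (x + y) = br z x + br z y" using lin_add[OF linR] .
lemma brL_neg: "br (- x) z = - br x z" using lin_neg[OF linL] .
lemma brR_neg: "br z (- x) = - br z x" using lin_neg[OF linR] .
lemma brL_diff: "br (x - y) z = br x z - br y z" using lin_diff[OF linL] .
lemma brR_diff: "br z (x - y) = br z x - br z y" using lin_diff[OF linR] .
lemma brL_0: "br 0 z = 0" using lin_zero[OF linL] .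
lemma brR_0: "br z 0 = 0" using lin_zero[OF linR] .

lemma br_anti: "br a b = - br b a"
proof -
  have "br (a+b) (a+b) = 0" "br a a = 0" "br b b = 0" using la by (auto simp: lie_algebra_def)
  then show ?thesis by (simp add: brL_add brR_add eq_neg_iff_add_eq_0 add.commute)
qed

lemma sc_add: "sc (a + b) x = sc a x + sc b x" using vs by (simp add: vector_space_def)
lemma sc_0: "sc 0 x = 0" using module.scale_zero_left[OF md] .
lemma sc_neg: "sc (- a) x = - sc a x" using sc_add[of a "-a" x] sc_0 by (simp add: eq_neg_iff_add_eq_0 add.commute)

lemma dualI: "Vector_Spaces.linear sc (*) f \<Longrightarrow> f \<in> dual sc" by (simp add: dual_def)
lemma dualD: "f \<in> dual sc \<Longrightarrow> Vector_Spaces.linear sc (*) f" by (simp add: dual_def)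

lemma dual_add: "f \<in> dual sc \<Longrightarrow> f (x + y) = f x + f y" using lin_add[OF dualD] .
lemma dual_scale: "f \<in> dual sc \<Longrightarrow> f (sc c x) = c * f x" using lin_scale[OF dualD] .
lemma dual_0: "f \<in> dual sc \<Longrightarrow> f 0 = 0" using lin_zero[OF dualD] .
lemma dual_neg: "f \<in> dual sc \<Longrightarrow> f (- x) = - f x" using lin_neg[OF dualD] .
lemma dual_diff: "f \<in> dual sc \<Longrightarrow> f (x - y) = f x - f y" using lin_diff[OF dualD] .

lemma dual_plus: "f \<in> dual sc \<Longrightarrow> g \<in> dual sc \<Longrightarrow> (\<lambda>x. f x + g x) \<in> dual sc"
  by (intro dualI) (auto simp: Vector_Spaces.linear_iff vs vs_field dual_add dual_scale algebra_simps)
lemma dual_uminus: "f \<in> dual sc \<Longrightarrow> (\<lambda>x. - f x) \<in> dual sc"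
  by (intro dualI) (auto simp: Vector_Spaces.linear_iff vs vs_field dual_add dual_scale algebra_simps)
lemma dual_zero: "(\<lambda>x. 0) \<in> dual sc"
  by (intro dualI) (auto simp: Vector_Spaces.linear_iff vs vs_field)
lemma dual_brR: "f \<in> dual sc \<Longrightarrow> (\<lambda>y. f (br x y)) \<in> dual sc"
  using Vector_Spaces.linear_compose[OF linR[of x] dualD[of f]] by (simp add: dual_def o_def)
lemma dual_brL: "f \<in> dual sc \<Longrightarrow> (\<lambda>y. f (br y x)) \<in> dual sc"
  using Vector_Spaces.linear_compose[OF linL[of x] dualD[of f]] by (simp add: dual_def o_def)

lemma dual_sum: "f \<in> dual sc \<Longrightarrow>
   f (\<Sum>(x,y)\<leftarrow>t. sc (c x y) (v x y)) = (\<Sum>(x,y)\<leftarrow>t. c x y * f (v x y))"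
  by (induction t) (auto simp: dual_add dual_scale dual_0)


abbreviation "D \<equiv> r_diff sc r"
abbreviation "J \<equiv> r_diff_inv sc r"
abbreviation "Rp \<equiv> r_flat_plus sc r"
abbreviation "Rm \<equiv> r_flat_minus sc r"
abbreviation "rp \<equiv> r_plus sc r"
abbreviation "rm \<equiv> r_minus sc r"

lemma pair_rp: "\<eta> \<in> dual sc \<Longrightarrow> \<eta> (rp \<xi>) = (\<Sum>(x,y)\<leftarrow>r. \<xi> x * \<eta> y)"
  unfolding r_plus_def by (rule dual_sum)
lemma pair_rm: "\<eta> \<in> dual sc \<Longrightarrow> \<eta> (rm \<xi>) = - (\<Sum>(x,y)\<leftarrow>r. \<xi> y * \<eta> x)"
  unfolding r_minus_def using dual_sum[where f=\<eta> and t=r and c="\<lambda>x y. \<xi> y" and v="\<lambda>x y. x"] by (simp add: dual_neg)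
lemma pair_D: "\<eta> \<in> dual sc \<Longrightarrow> \<eta> (D \<xi>) = (\<Sum>(x,y)\<leftarrow>r. \<xi> x * \<eta> y + \<xi> y * \<eta> x)"
  unfolding r_diff_def by (simp add: dual_diff pair_rp pair_rm sum_list_addf split_def)

lemma sum_sc_add1: "(\<Sum>(x,y)\<leftarrow>t. sc (f x + g x) y) = (\<Sum>(x,y)\<leftarrow>t. sc (f x) y) + (\<Sum>(x,y)\<leftarrow>t. sc (g x) y)"
  by (induction t) (auto simp: sc_add algebra_simps)
lemma sum_sc_add2: "(\<Sum>(x,y)\<leftarrow>t. sc (f y + g y) x) = (\<Sum>(x,y)\<leftarrow>t. sc (f y) x) + (\<Sum>(x,y)\<leftarrow>t. sc (g y) x)"
  by (induction t) (auto simp: sc_add algebra_simps)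
lemma sum_sc_neg1: "(\<Sum>(x,y)\<leftarrow>t. sc (- f x) y) = - (\<Sum>(x,y)\<leftarrow>t. sc (f x) y)"
  by (induction t) (auto simp: sc_neg algebra_simps)
lemma sum_sc_neg2: "(\<Sum>(x,y)\<leftarrow>t. sc (- f y) x) = - (\<Sum>(x,y)\<leftarrow>t. sc (f y) x)"
  by (induction t) (auto simp: sc_neg algebra_simps)
lemma sum_sc_zero1: "(\<Sum>(x,y)\<leftarrow>t. sc 0 y) = 0"
  by (induction t) (auto simp: sc_0)
lemma sum_sc_zero2: "(\<Sum>(x,y)\<leftarrow>t. sc 0 x) = 0"
  by (induction t) (auto simp: sc_0)

lemma rp_add: "rp (\<lambda>x. f x + g x) = rp f + rp g" unfolding r_plus_def by (rule sum_sc_add1)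
lemma rm_add: "rm (\<lambda>x. f x + g x) = rm f + rm g" unfolding r_minus_def by (simp add: sum_sc_add2)
lemma rp_neg: "rp (\<lambda>x. - f x) = - rp f" unfolding r_plus_def by (rule sum_sc_neg1)
lemma rm_neg: "rm (\<lambda>x. - f x) = - rm f" unfolding r_minus_def by (simp add: sum_sc_neg2)
lemma rp_zero: "rp (\<lambda>x. 0) = 0" unfolding r_plus_def by (rule sum_sc_zero1)
lemma rm_zero: "rm (\<lambda>x. 0) = 0" unfolding r_minus_def by (simp add: sum_sc_zero2)
lemma D_add: "D (\<lambda>x. f x + g x) = D f + D g" unfolding r_diff_def by (simp add: rp_add rm_add)
lemma D_neg: "D (\<lambda>x. - f x) = - D f" unfolding r_diff_def by (simp add: rp_neg rm_neg)
lemma D_zero: "D (\<lambda>x. 0) = 0" unfolding r_diff_def by (simp add: rp_zero rm_zero)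

lemma bij: "bij_betw D (dual sc) UNIV" using fq by (simp add: factorizable_qt_def)
lemma J_dual: "J v \<in> dual sc"
  unfolding r_diff_inv_def using bij by (metis UNIV_I bij_betw_imp_surj_on inv_into_into)
lemma DJ: "D (J v) = v"
  unfolding r_diff_inv_def using bij by (simp add: bij_betw_inv_into_right)
lemma JD: "\<phi> \<in> dual sc \<Longrightarrow> J (D \<phi>) = \<phi>"
  unfolding r_diff_inv_def using bij by (simp add: bij_betw_inv_into_left)

lemma J_add: "J (a + b) = (\<lambda>x. J a x + J b x)"
proof -
  have "D (\<lambda>x. J a x + J b x) = a + b" by (simp add: D_add DJ)
  then show ?thesis using JD[OF dual_plus[OF J_dual J_dual]] by metis
qed
lemma J_neg: "J (- a) = (\<lambda>x. - J a x)"
proof -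
  have "D (\<lambda>x. - J a x) = - a" by (simp add: D_neg DJ)
  then show ?thesis using JD[OF dual_uminus[OF J_dual]] by metis
qed
lemma J_zero: "J 0 = (\<lambda>x. 0)"
  using JD[OF dual_zero] D_zero by metis

lemma Rp_unf: "Rp v = rp (J v)" by (simp add: r_flat_plus_def)
lemma Rm_unf: "Rm v = rm (J v)" by (simp add: r_flat_minus_def)
lemma Rp_add: "Rp (a + b) = Rp a + Rp b" by (simp add: Rp_unf J_add rp_add)
lemma Rm_add: "Rm (a + b) = Rm a + Rm b" by (simp add: Rm_unf J_add rm_add)
lemma Rp_neg: "Rp (- a) = - Rp a" by (simp add: Rp_unf J_neg rp_neg)
lemma Rm_neg: "Rm (- a) = - Rm a" by (simp add: Rm_unf J_neg rm_neg)
lemma Rp_0: "Rp 0 = 0" by (simp add: Rp_unf J_zero rp_zero)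
lemma Rm_0: "Rm 0 = 0" by (simp add: Rm_unf J_zero rm_zero)
lemma Rp_diff: "Rp (a - b) = Rp a - Rp b" using Rp_add[of a "-b"] by (simp add: Rp_neg)
lemma Rm_diff: "Rm (a - b) = Rm a - Rm b" using Rm_add[of a "-b"] by (simp add: Rm_neg)
lemma RpRm: "Rp v - Rm v = v" using DJ[of v] by (simp add: r_diff_def Rp_unf Rm_unf)
lemma Rp_eq: "Rp v = v + Rm v" using RpRm[of v] by (simp add: algebra_simps)
lemma Rm_eq: "Rm v = Rp v - v" using RpRm[of v] by (simp add: algebra_simps)
lemma comm: "Rp (Rm v) = Rm (Rp v)" by (simp add: Rp_eq[of v] Rm_add Rp_eq[of "Rm v"])

lemma J_sym: "J a b = J b a"
proof -
  have "J a b = J a (D (J b))" by (simp add: DJ)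
  also have "\<dots> = (\<Sum>(x,y)\<leftarrow>r. J b x * J a y + J b y * J a x)" by (rule pair_D[OF J_dual])
  also have "\<dots> = (\<Sum>(x,y)\<leftarrow>r. J a x * J b y + J a y * J b x)" by (simp add: ac_simps)
  also have "\<dots> = J b (D (J a))" by (rule pair_D[OF J_dual, symmetric])
  finally show ?thesis by (simp add: DJ)
qed

lemma sep2: "(\<And>x. J x v = 0) \<Longrightarrow> v = 0"
proof -
  assume "\<And>x. J x v = 0"
  then have "J v = (\<lambda>x. 0)" using J_sym by auto
  then show "v = 0" using DJ[of v] D_zero by simp
qed
lemma sep: "(\<And>\<phi>. \<phi> \<in> dual sc \<Longrightarrow> \<phi> v = 0) \<Longrightarrow> v = 0"
  using sep2 J_dual by blast


lemma sum_ad2: "(\<Sum>(a,b)\<leftarrow>ad2 br x t. (f a b :: 'k)) = (\<Sum>(a,b)\<leftarrow>t. f (br x a) b + f a (br x b))"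
  unfolding ad2_def by (induction t) auto
lemma sum_flip: "(\<Sum>(a,b)\<leftarrow>flip21 t. (f a b :: 'k)) = (\<Sum>(a,b)\<leftarrow>t. f b a)"
  unfolding flip21_def by (induction t) auto

lemma inv_vec: "\<phi> \<in> dual sc \<Longrightarrow> D (\<lambda>y. \<phi> (br x y)) + br x (D \<phi>) = 0"
proof (rule sep)
  fix \<psi> assume \<phi>: "\<phi> \<in> dual sc" and \<psi>: "\<psi> \<in> dual sc"
  have "tensor2_zero sc (ad2 br x (r @ flip21 r))" using fq by (simp add: factorizable_qt_def)
  then have 0: "(\<Sum>(a,b)\<leftarrow>ad2 br x (r @ flip21 r). \<phi> a * \<psi> b) = 0"
    using \<phi> \<psi> by (simp add: tensor2_zero_def)
  have e: "ad2 br x (r @ flip21 r) = ad2 br x r @ ad2 br x (flip21 r)" by (simp add: ad2_def)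
  have "(\<Sum>(a,b)\<leftarrow>ad2 br x (r @ flip21 r). \<phi> a * \<psi> b)
     = (\<Sum>(a,b)\<leftarrow>r. \<phi> (br x a) * \<psi> b + \<phi> a * \<psi> (br x b))
      + (\<Sum>(a,b)\<leftarrow>r. \<phi> (br x b) * \<psi> a + \<phi> b * \<psi> (br x a))"
    unfolding e sum_list_append map_append
    using sum_ad2[of "\<lambda>a b. \<phi> a * \<psi> b" x r] sum_ad2[of "\<lambda>a b. \<phi> a * \<psi> b" x "flip21 r"]
      sum_flip[of "\<lambda>a b. \<phi> (br x a) * \<psi> b + \<phi> a * \<psi> (br x b)" r]
    by simp
  also have "\<dots> = \<psi> (D (\<lambda>y. \<phi> (br x y))) + \<psi> (br x (D \<phi>))"
    using pair_D[OF \<psi>, of "\<lambda>y. \<phi> (br x y)"] pair_D[OF dual_brR[OF \<psi>, of x], of \<phi>]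
    by (simp add: sum_list_addf split_def ac_simps)
  finally show "\<psi> (D (\<lambda>y. \<phi> (br x y)) + br x (D \<phi>)) = 0" using 0 \<psi> by (simp add: dual_add)
qed

lemma J_br: "J (br x a) = (\<lambda>y. - J a (br x y))"
proof -
  have "D (\<lambda>y. J a (br x y)) + br x a = 0" using inv_vec[OF J_dual, of a x] by (simp add: DJ)
  then have "br x a = - D (\<lambda>y. J a (br x y))" by (simp add: eq_neg_iff_add_eq_0 add.commute)
  then have "J (br x a) = (\<lambda>z. - J (D (\<lambda>y. J a (br x y))) z)" by (simp add: J_neg)
  then show ?thesis by (simp add: JD[OF dual_brR[OF J_dual]])
qed


lemma J_brL: "(\<lambda>y. J p (br y w)) = J (br w p)"
proof
  fix y show "J p (br y w) = J (br w p) y"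
    using br_anti[of y w] by (simp add: J_br dual_neg[OF J_dual])
qed

lemma vecJ: "rp (\<lambda>y. J p (br x y)) = - Rp (br x p)"
proof -
  have "(\<lambda>y. J p (br x y)) = (\<lambda>y. - J (br x p) y)" by (simp add: J_br)
  then show ?thesis by (simp add: rp_neg Rp_unf)
qed

lemma delta_iff: "delta_zero sc br r x \<longleftrightarrow> (\<forall>p. br x (Rp p) = Rp (br x p))"
proof -
  have s: "(\<Sum>(a,b)\<leftarrow>ad2 br x r. \<phi> a * \<psi> b) = \<psi> (rp (\<lambda>y. \<phi> (br x y)) + br x (rp \<phi>))"
    if "\<phi> \<in> dual sc" "\<psi> \<in> dual sc" for \<phi> \<psi>
    using that sum_ad2[of "\<lambda>a b. \<phi> a * \<psi> b" x r] pair_rp[OF that(2), of "\<lambda>y. \<phi> (br x y)"]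
      pair_rp[OF dual_brR[OF that(2)], of x \<phi>]
    by (simp add: dual_add sum_list_addf split_def)
  show ?thesis
  proof
    assume d: "delta_zero sc br r x"
    show "\<forall>p. br x (Rp p) = Rp (br x p)"
    proof
      fix p
      have "rp (\<lambda>y. J p (br x y)) + br x (rp (J p)) = 0"
      proof (rule sep)
        fix \<psi> assume "\<psi> \<in> dual sc"
        then show "\<psi> (rp (\<lambda>y. J p (br x y)) + br x (rp (J p))) = 0"
          using d s[OF J_dual, of \<psi> p] by (simp add: delta_zero_def tensor2_zero_def J_dual)
      qed
      then show "br x (Rp p) = Rp (br x p)" by (simp add: vecJ Rp_unf[symmetric])
    qed
  next
    assume h: "\<forall>p. br x (Rp p) = Rp (br x p)"
    show "delta_zero sc br r x" unfolding delta_zero_def tensor2_zero_def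
    proof (intro ballI)
      fix \<phi> \<psi> assume \<phi>: "\<phi> \<in> dual sc" and \<psi>: "\<psi> \<in> dual sc"
      have "rp (\<lambda>y. \<phi> (br x y)) + br x (rp \<phi>) = 0"
        using vecJ[of "D \<phi>" x] h[rule_format, of "D \<phi>"] JD[OF \<phi>] by (simp add: Rp_unf)
      then show "(\<Sum>(a,b)\<leftarrow>ad2 br x r. \<phi> a * \<psi> b) = 0" using s[OF \<phi> \<psi>] \<psi> by (simp add: dual_0)
    qed
  qed
qed


lemma cybe_inner: "(\<Sum>(a,b,c)\<leftarrow>concat (map (\<lambda>(xj,yj).
        [(br xi xj, yi, yj), (xi, br yi xj, yj), (xi, xj, br yi yj)]) s). (\<phi> a * \<psi> b * \<chi> c :: 'k))
   = \<psi> yi * (\<Sum>(xj,yj)\<leftarrow>s. \<chi> yj * \<phi> (br xi xj))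
     + (\<Sum>(xj,yj)\<leftarrow>s. \<chi> yj * \<psi> (br yi xj)) * \<phi> xi
     + (\<Sum>(xj,yj)\<leftarrow>s. \<psi> xj * \<chi> (br yi yj)) * \<phi> xi"
  by (induction s) (auto simp: algebra_simps)

lemma cybe_outer: "(\<Sum>(a,b,c)\<leftarrow>concat (map (\<lambda>(xi,yi). concat (map (\<lambda>(xj,yj).
        [(br xi xj, yi, yj), (xi, br yi xj, yj), (xi, xj, br yi yj)]) s)) t). (\<phi> a * \<psi> b * \<chi> c :: 'k))
   = (\<Sum>(xi,yi)\<leftarrow>t. \<psi> yi * (\<Sum>(xj,yj)\<leftarrow>s. \<chi> yj * \<phi> (br xi xj))
     + (\<Sum>(xj,yj)\<leftarrow>s. \<chi> yj * \<psi> (br yi xj)) * \<phi> xi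
     + (\<Sum>(xj,yj)\<leftarrow>s. \<psi> xj * \<chi> (br yi yj)) * \<phi> xi)"
proof (induction t)
  case Nil then show ?case by simp
next
  case (Cons p t)
  obtain xi yi where p: "p = (xi, yi)" by fastforce
  show ?case using Cons cybe_inner[where xi=xi and yi=yi and s=s and \<phi>=\<phi> and \<psi>=\<psi> and \<chi>=\<chi>] by (simp add: p)
qed

lemma pair_rm_brL: "\<phi> \<in> dual sc \<Longrightarrow> \<phi> (br (rm \<xi>) w) = - (\<Sum>(x,y)\<leftarrow>r. \<xi> y * \<phi> (br x w))"
  using pair_rm[OF dual_brL[of \<phi> w]] by simp
lemma pair_rm_brR: "\<phi> \<in> dual sc \<Longrightarrow> \<phi> (br w (rm \<xi>)) = - (\<Sum>(x,y)\<leftarrow>r. \<xi> y * \<phi> (br w x))"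
  using pair_rm[OF dual_brR[of \<phi> w]] by simp
lemma pair_rp_brR: "\<phi> \<in> dual sc \<Longrightarrow> \<phi> (br w (rp \<xi>)) = (\<Sum>(x,y)\<leftarrow>r. \<xi> x * \<phi> (br w y))"
  using pair_rp[OF dual_brR[of \<phi> w]] by simp

lemma sum_neg_const: "(\<Sum>(x,y)\<leftarrow>t. c x y * (- f x y :: 'k)) = - (\<Sum>(x,y)\<leftarrow>t. c x y * f x y)"
  by (induction t) auto
lemma sum_neg: "(\<Sum>(x,y)\<leftarrow>t. - (f x y :: 'k)) = - (\<Sum>(x,y)\<leftarrow>t. f x y)"
  by (induction t) auto
lemma sum_const_mult2: "(\<Sum>(x,y)\<leftarrow>t. (a::'k) * f x y) = a * (\<Sum>(x,y)\<leftarrow>t. f x y)"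
  by (induction t) (auto simp: algebra_simps)

lemma cybe_vec:
  assumes \<psi>: "\<psi> \<in> dual sc" and \<chi>: "\<chi> \<in> dual sc"
  shows "br (rm \<psi>) (rm \<chi>) - rm (\<lambda>y. \<psi> (br y (- rm \<chi>))) - rm (\<lambda>y. \<chi> (br y (rp \<psi>))) = 0"
proof (rule sep)
  fix \<phi> assume \<phi>: "\<phi> \<in> dual sc"
  have c: "cybe sc br r" using fq by (simp add: factorizable_qt_def)
  have 0: "(\<Sum>(xi,yi)\<leftarrow>r. \<psi> yi * (\<Sum>(xj,yj)\<leftarrow>r. \<chi> yj * \<phi> (br xi xj))
     + (\<Sum>(xj,yj)\<leftarrow>r. \<chi> yj * \<psi> (br yi xj)) * \<phi> xi
     + (\<Sum>(xj,yj)\<leftarrow>r. \<psi> xj * \<chi> (br yi yj)) * \<phi> xi) = 0"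
    using c \<phi> \<psi> \<chi> cybe_outer[of \<phi> \<psi> \<chi> r r] by (simp add: cybe_def tensor3_zero_def)
  have a: "\<phi> (br (rm \<psi>) (rm \<chi>)) = (\<Sum>(xi,yi)\<leftarrow>r. \<psi> yi * (\<Sum>(xj,yj)\<leftarrow>r. \<chi> yj * \<phi> (br xi xj)))"
    using \<phi> by (simp add: pair_rm_brL pair_rm_brR sum_neg_const sum_neg)
  have b: "\<phi> (rm (\<lambda>y. \<psi> (br y (- rm \<chi>)))) = - (\<Sum>(xi,yi)\<leftarrow>r. (\<Sum>(xj,yj)\<leftarrow>r. \<chi> yj * \<psi> (br yi xj)) * \<phi> xi)"
    using \<phi> \<psi> by (simp add: pair_rm brR_neg dual_neg pair_rm_brR)
  have c': "\<phi> (rm (\<lambda>y. \<chi> (br y (rp \<psi>)))) = - (\<Sum>(xi,yi)\<leftarrow>r. (\<Sum>(xj,yj)\<leftarrow>r. \<psi> xj * \<chi> (br yi yj)) * \<phi> xi)"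
    using \<phi> \<chi> by (simp add: pair_rm pair_rp_brR)
  show "\<phi> (br (rm \<psi>) (rm \<chi>) - rm (\<lambda>y. \<psi> (br y (- rm \<chi>))) - rm (\<lambda>y. \<chi> (br y (rp \<psi>)))) = 0"
    using 0 a b c' \<phi> by (simp add: dual_diff sum_list_addf split_def)
qed


lemma hom_m: "br (Rm p) (Rm q) = Rm (br (Rp p) q + br p (Rm q))"
proof -
  have v: "br (Rm p) (Rm q) - rm (\<lambda>y. J p (br y (- Rm q))) - rm (\<lambda>y. J q (br y (Rp p))) = 0"
    using cybe_vec[OF J_dual J_dual, of p q] by (simp add: Rm_unf Rp_unf)
  have e1: "rm (\<lambda>y. J p (br y (- Rm q))) = Rm (br p (Rm q))"
    unfolding J_brL Rm_unf[symmetric] using br_anti[of p "Rm q"] by (simp add: brL_neg)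
  have e2: "rm (\<lambda>y. J q (br y (Rp p))) = Rm (br (Rp p) q)"
    unfolding J_brL Rm_unf[symmetric] ..
  show ?thesis using v unfolding e1 e2 by (simp add: Rm_add algebra_simps)
qed

lemma hom_p: "br (Rp p) (Rp q) = Rp (br (Rp p) q + br p (Rm q))"
proof -
  have "br (Rp p) (Rp q) = br (Rm p) (Rm q) + br (Rm p) q + br p (Rm q) + br p q"
    by (simp add: Rp_eq brL_add brR_add algebra_simps)
  also have "\<dots> = Rm (br (Rp p) q + br p (Rm q)) + (br (Rp p) q + br p (Rm q))"
    by (simp add: hom_m Rp_eq[of p] brL_add algebra_simps)
  also have "\<dots> = Rp (br (Rp p) q + br p (Rm q))" by (metis Rp_eq add.commute)
  finally show ?thesis .
qed

lemma lr_mem: "(p, q) \<in> l_r sc r \<longleftrightarrow> Rm p = Rp q"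
proof
  assume "(p, q) \<in> l_r sc r"
  then obtain x where "p = Rp x" "q = Rm x" by (auto simp: l_r_def)
  then show "Rm p = Rp q" by (simp add: comm)
next
  assume h: "Rm p = Rp q"
  have "p = Rp (p - q)" unfolding Rp_diff h[symmetric] Rm_eq[of p] by simp
  moreover have "q = Rm (p - q)" unfolding Rm_diff h Rp_eq[of q] by simp
  ultimately show "(p, q) \<in> l_r sc r" unfolding l_r_def by blast
qed

lemma f_plus_eq: "f_plus sc r = range Rp"
  unfolding f_plus_def
proof safe
  fix \<phi> assume "\<phi> \<in> dual sc" then show "rp \<phi> \<in> range Rp" using JD by (metis Rp_unf rangeI)
next
  fix x show "Rp x \<in> rp ` dual sc" by (simp add: Rp_unf J_dual)
qed
lemma f_minus_eq: "f_minus sc r = range Rm"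
  unfolding f_minus_def
proof safe
  fix \<phi> assume "\<phi> \<in> dual sc" then show "rm \<phi> \<in> range Rm" using JD by (metis Rm_unf rangeI)
next
  fix x show "Rm x \<in> rm ` dual sc" by (simp add: Rm_unf J_dual)
qed

lemma Jc_Rp: "J c (Rp u) = - J u (Rm c)"
  using pair_rp[OF J_dual, of c "J u"] pair_rm[OF J_dual, of u "J c"]
  by (simp add: Rp_unf Rm_unf ac_simps)
lemma Jc_Rm: "J c (Rm u) = - J u (Rp c)"
  using Jc_Rp[of u c] by simp

lemma perp_plus: "c \<in> perp sc r (f_plus sc r) \<longleftrightarrow> Rm c = 0"
proof -
  have "c \<in> perp sc r (f_plus sc r) \<longleftrightarrow> (\<forall>u. J u (Rm c) = 0)"
    by (simp add: perp_def f_plus_eq form_g_def Jc_Rp)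
  also have "\<dots> \<longleftrightarrow> Rm c = 0" using sep2[of "Rm c"] by (auto simp: dual_0[OF J_dual])
  finally show ?thesis .
qed
lemma perp_minus: "c \<in> perp sc r (f_minus sc r) \<longleftrightarrow> Rp c = 0"
proof -
  have "c \<in> perp sc r (f_minus sc r) \<longleftrightarrow> (\<forall>u. J u (Rp c) = 0)"
    by (simp add: perp_def f_minus_eq form_g_def Jc_Rm)
  also have "\<dots> \<longleftrightarrow> Rp c = 0" using sep2[of "Rp c"] by (auto simp: dual_0[OF J_dual])
  finally show ?thesis .
qed


lemma L2:
  assumes Cy: "\<And>p. br y (Rp p) = Rp (br y p)"
  shows "J (br (Rp a) u + br a (Rm u)) y = 0"
proof -
  have s1: "J y (br (Rp a) u) = - J (br y a) (Rm u)"
  proof -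
    have "J y (br (Rp a) u) = - J (br (Rp a) y) u" by (simp add: J_br)
    also have "br (Rp a) y = - Rp (br y a)" using br_anti[of "Rp a" y] Cy[of a] by simp
    also have "- J (- Rp (br y a)) u = J (Rp (br y a)) u" by (simp add: J_neg)
    also have "\<dots> = J u (Rp (br y a))" by (rule J_sym)
    also have "\<dots> = - J (br y a) (Rm u)" by (rule Jc_Rp)
    finally show ?thesis .
  qed
  have s2: "J y (br a (Rm u)) = J (br y a) (Rm u)"
  proof -
    have "J y (br a (Rm u)) = - J (br a y) (Rm u)" by (simp add: J_br)
    also have "br a y = - br y a" by (rule br_anti)
    finally show ?thesis by (simp add: J_neg)
  qed
  have "J (br (Rp a) u + br a (Rm u)) y = J y (br (Rp a) u + br a (Rm u))" by (rule J_sym)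
  also have "\<dots> = J y (br (Rp a) u) + J y (br a (Rm u))" by (rule dual_add[OF J_dual])
  finally show ?thesis using s1 s2 by simp
qed

lemma L2': "J v (Rm (Rp Z)) = J Z (Rm (Rp v))"
proof -
  have "J v (Rm (Rp Z)) = - J (Rp Z) (Rp v)" by (rule Jc_Rm)
  also have "J (Rp Z) (Rp v) = J (Rp v) (Rp Z)" by (rule J_sym)
  also have "\<dots> = - J Z (Rm (Rp v))" by (rule Jc_Rp)
  finally show ?thesis by simp
qed

lemma Cm: "(\<And>p. br x (Rp p) = Rp (br x p)) \<Longrightarrow> br x (Rm p) = Rm (br x p)"
  by (simp add: Rm_eq[of p] Rm_eq[of "br x p"] brR_diff)

lemma main:
  assumes Mp: "lie_subalgebra sc br Mp" and Mm: "lie_subalgebra sc br Mm"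
    and lr: "l_r sc r \<subseteq> Mp \<times> Mm"
  shows "((Mp \<times> Mm \<subseteq> normalizer2 br (l_r sc r))
           \<longleftrightarrow> ((\<forall>a\<in>Mp. \<forall>b\<in>f_plus sc r. br a b \<in> perp sc r (f_plus sc r))
                \<and> (\<forall>a\<in>Mm. \<forall>b\<in>f_minus sc r. br a b \<in> perp sc r (f_minus sc r))))
         \<and> ((Mp \<times> Mm \<subseteq> normalizer2 br (l_r sc r))
           \<longleftrightarrow> (\<forall>x\<in>Mp \<inter> Mm. delta_zero sc br r x))"
proof -
  have sMp: "module.subspace sc Mp" and sMm: "module.subspace sc Mm"
    using Mp Mm by (auto simp: lie_subalgebra_def)
  have cMp: "br a b \<in> Mp" if "a \<in> Mp" "b \<in> Mp" for a b using Mp that by (auto simp: lie_subalgebra_def)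
  have cMm: "br a b \<in> Mm" if "a \<in> Mm" "b \<in> Mm" for a b using Mm that by (auto simp: lie_subalgebra_def)
  have hRp: "Rp v \<in> Mp" and hRm: "Rm v \<in> Mm" for v
    using lr lr_mem[of "Rp v" "Rm v"] comm[of v] by auto
  have 0: "0 \<in> Mp" "0 \<in> Mm" using module.subspace_0[OF md] sMp sMm by auto
  define AB where "AB \<longleftrightarrow> (\<forall>a\<in>Mp. \<forall>u. Rm (br a (Rp u)) = 0) \<and> (\<forall>b\<in>Mm. \<forall>u. Rp (br b (Rm u)) = 0)"
  have I1: "(Mp \<times> Mm \<subseteq> normalizer2 br (l_r sc r)) \<longleftrightarrow> AB"
  proof
    assume N: "Mp \<times> Mm \<subseteq> normalizer2 br (l_r sc r)"
    have lm: "(Rp u, Rm u) \<in> l_r sc r" for u using lr_mem comm by simp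
    have "Rm (br a (Rp u)) = Rp (br b (Rm u))" if "a \<in> Mp" "b \<in> Mm" for a b u
      using N that lm[of u] lr_mem by (force simp: normalizer2_def)
    then show AB unfolding AB_def using 0 by (metis brL_0 Rp_0 Rm_0)
  next
    assume AB
    show "Mp \<times> Mm \<subseteq> normalizer2 br (l_r sc r)"
      unfolding normalizer2_def
    proof (safe)
      fix a b u v assume "a \<in> Mp" "b \<in> Mm" "(u, v) \<in> l_r sc r"
      then obtain x where "u = Rp x" "v = Rm x" by (auto simp: l_r_def)
      then show "(br a u, br b v) \<in> l_r sc r" using \<open>AB\<close> \<open>a \<in> Mp\<close> \<open>b \<in> Mm\<close>
        by (simp add: lr_mem AB_def)
    qed
  qed
  have I2: "((\<forall>a\<in>Mp. \<forall>b\<in>f_plus sc r. br a b \<in> perp sc r (f_plus sc r))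
                \<and> (\<forall>a\<in>Mm. \<forall>b\<in>f_minus sc r. br a b \<in> perp sc r (f_minus sc r))) \<longleftrightarrow> AB"
    unfolding AB_def perp_plus perp_minus by (simp add: f_plus_eq f_minus_eq)
  have tRm: "Rm x \<in> Mp \<inter> Mm" if "x \<in> Mp \<inter> Mm" for x
    using that hRm[of x] hRp[of x] Rm_eq[of x] module.subspace_diff[OF md sMp] by auto
  have I3: "(\<forall>x\<in>Mp \<inter> Mm. delta_zero sc br r x) \<longleftrightarrow> AB"
  proof
    assume "\<forall>x\<in>Mp \<inter> Mm. delta_zero sc br r x"
    then have C: "\<And>x p. x \<in> Mp \<inter> Mm \<Longrightarrow> br x (Rp p) = Rp (br x p)" by (simp add: delta_iff)
    have L1: "Rm (Rp (br x u)) = 0" if x: "x \<in> Mp \<inter> Mm" for x u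
    proof -
      have "br (Rm x) (Rm u) = Rm (br (Rp x) u + br x (Rm u))" by (rule hom_m)
      moreover have "br (Rm x) (Rm u) = Rm (br (Rm x) u)" using Cm[OF C[OF tRm[OF x]]] .
      moreover have "br x (Rm u) = Rm (br x u)" using Cm[OF C[OF x]] .
      ultimately have "Rm (br (Rm x) u) = Rm (br (Rm x) u) + Rm (br x u) + Rm (Rm (br x u))"
        by (simp add: Rp_eq[of x] brL_add Rm_add)
      then have "Rm (br x u) + Rm (Rm (br x u)) = 0" by (simp add: algebra_simps)
      then show ?thesis by (simp add: Rp_eq[of "br x u"] Rm_add add.commute)
    qed
    have L2f: "Rm (Rp (br (Rp a) u + br a (Rm u))) = 0" for a u
    proof (rule sep2)
      fix v
      have y: "Rm (Rp v) \<in> Mp \<inter> Mm"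
        using hRm[of "Rp v"] Rm_eq[of "Rp v"] hRp[of "Rp v"] hRp[of v] module.subspace_diff[OF md sMp] by auto
      show "J v (Rm (Rp (br (Rp a) u + br a (Rm u)))) = 0"
        using L2[OF C[OF y], of a u] L2'[of v "br (Rp a) u + br a (Rm u)"] by simp
    qed
    have A: "Rm (br a (Rp u)) = 0" if a: "a \<in> Mp" for a u
    proof -
      have x: "Rm a \<in> Mp \<inter> Mm" using hRm[of a] Rm_eq[of a] hRp[of a] a module.subspace_diff[OF md sMp] by auto
      have "a = Rp a - Rm a" by (simp add: RpRm)
      then have "Rm (br a (Rp u)) = Rm (br (Rp a) (Rp u)) - Rm (br (Rm a) (Rp u))"
        by (metis brL_diff Rm_diff)
      also have "Rm (br (Rm a) (Rp u)) = Rm (Rp (br (Rm a) u))" using C[OF x] by simp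
      also have "\<dots> = 0" using L1[OF x] .
      also have "Rm (br (Rp a) (Rp u)) = 0" using L2f[of a u] by (simp add: hom_p comm)
      finally show ?thesis by simp
    qed
    have B: "Rp (br b (Rm u)) = 0" if b: "b \<in> Mm" for b u
    proof -
      have x: "Rp b \<in> Mp \<inter> Mm" using hRp[of b] Rp_eq[of b] hRm[of b] b module.subspace_add[OF md sMm] by auto
      have "b = Rp b - Rm b" by (simp add: RpRm)
      then have "Rp (br b (Rm u)) = Rp (br (Rp b) (Rm u)) - Rp (br (Rm b) (Rm u))"
        by (metis brL_diff Rp_diff)
      also have "Rp (br (Rp b) (Rm u)) = Rp (Rm (br (Rp b) u))" using Cm[OF C[OF x]] by simp
      also have "\<dots> = 0" using L1[OF x] by (simp add: comm)
      also have "Rp (br (Rm b) (Rm u)) = 0" using L2f[of b u] by (simp add: hom_m comm)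
      finally show ?thesis by simp
    qed
    show AB unfolding AB_def using A B by blast
  next
    assume AB
    show "\<forall>x\<in>Mp \<inter> Mm. delta_zero sc br r x"
    proof (intro ballI)
      fix x assume x: "x \<in> Mp \<inter> Mm"
      have "br x (Rp p) = Rp (br x p)" for p
      proof -
        have "Rp (br x p) = Rp (br x (Rp p)) - Rp (br x (Rm p))"
          by (metis RpRm brR_diff Rp_diff)
        also have "Rp (br x (Rm p)) = 0" using \<open>AB\<close> x by (simp add: AB_def)
        also have "Rp (br x (Rp p)) = br x (Rp p) + Rm (br x (Rp p))" by (rule Rp_eq)
        also have "Rm (br x (Rp p)) = 0" using \<open>AB\<close> x by (simp add: AB_def)
        finally show ?thesis by simp
      qed
      then show "delta_zero sc br r x" by (simp add: delta_iff)
    qed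
  qed
  show ?thesis using I1 I2 I3 by blast
qed

end

theorem lemma4p11:
  fixes sc :: "'k::real_normed_field \<Rightarrow> 'g::ab_group_add \<Rightarrow> 'g"
    and br :: "'g \<Rightarrow> 'g \<Rightarrow> 'g"
    and r :: "('g \<times> 'g) list"
    and Mp Mm :: "'g set"
  assumes "lie_algebra sc br"
    and "factorizable_qt sc br r"
    and "lie_subalgebra sc br Mp" and "lie_subalgebra sc br Mm"
    and "l_r sc r \<subseteq> Mp \<times> Mm"
  shows "((Mp \<times> Mm \<subseteq> normalizer2 br (l_r sc r))
           \<longleftrightarrow> ((\<forall>a\<in>Mp. \<forall>b\<in>f_plus sc r. br a b \<in> perp sc r (f_plus sc r))
                \<and> (\<forall>a\<in>Mm. \<forall>b\<in>f_minus sc r. br a b \<in> perp sc r (f_minus sc r))))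
         \<and> ((Mp \<times> Mm \<subseteq> normalizer2 br (l_r sc r))
           \<longleftrightarrow> (\<forall>x\<in>Mp \<inter> Mm. delta_zero sc br r x))"
proof -
  interpret LA sc br r using assms(1,2) by unfold_locales
  show ?thesis using main[OF assms(3-5)] .
qed

end
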